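(* Let $k \geq 2$, $n \geq 2$ and $\lambda \geq 1$ be integers. Suppose $A$ is an $\mathrm{OA}_{\lambda}(k,n)$ on a symbol set containing the symbol $1$, and suppose that the row $(1,1,\dots,1)$ is repeated $m$ times in $A$ (i.e., $m$ of the rows of $A$ equal $(1,1,\dots,1)$), where \[m = \frac{\lambda n^2}{k(n-1)+1}.\] Then every other row of $A$ (each of the remaining $\lambda n^2 - m$ rows) contains exactly \[\overline{a} = \frac{k(\lambda n - m)}{\lambda n^2-m}\] occurrences of the symbol $1$.
   Context: An orthogonal array $\mathrm{OA}_{\lambda}(k,n)$ (of strength two) is a $\lambda n^2$ by $k$ array $A$ with entries from a set $X$ of cardinality $n$ such that, within any two columns of $A$, every ordered pair of symbols from $X$ occurs in exactly $\lambda$ rows of $A$. *)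

theory Defs
  imports Complex_Main
begin

definition orthogonal_array ::
  "nat \<Rightarrow> nat \<Rightarrow> nat \<Rightarrow> 'a set \<Rightarrow> (nat \<Rightarrow> nat \<Rightarrow> 'a) \<Rightarrow> bool" where
  "orthogonal_array lam k n X A \<longleftrightarrow>
     finite X \<and> card X = n \<and>
     (\<forall>r < lam * n^2. \<forall>c < k. A r c \<in> X) \<and>
     (\<forall>c1 < k. \<forall>c2 < k. c1 \<noteq> c2 \<longrightarrow>
        (\<forall>x \<in> X. \<forall>y \<in> X.
           card {r. r < lam * n^2 \<and> A r c1 = x \<and> A r c2 = y} = lam))"

end

theory Submission
  imports Defs
begin

lemma card_ind:
  assumes "finite A"
  shows "real (card {x \<in> A. P x}) = (\<Sum>x\<in>A. if P x then 1 else 0)"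
  using assms by (simp add: sum.If_cases Int_def conj_commute)

lemma key_alg:
  fixes L m n k :: real
  assumes "L * n^2 = m * (k*(n-1)+1)" "n > 0"
  shows "(L*n^2 - m) * (k*L*n + k*(k-1)*L - m*k^2) = (k*(L*n - m))^2"
proof -
  define x where "x = L*n"
  have xn: "x*n = m*(k*(n-1)+1)" using assms(1) by (simp add: x_def power2_eq_square algebra_simps)
  have "n * ((L*n^2 - m) * (k*L*n + k*(k-1)*L - m*k^2)) = n * (k*(L*n - m))^2"
  proof -
    have "n * ((L*n^2 - m) * (k*L*n + k*(k-1)*L - m*k^2))
        = k^2 * (m*(n-1)) * (x*n + (k-1)*x - m*k*n)"
    proof -
      have e: "L*n^2 - m = m*k*(n-1)" using assms(1) by (simp add: algebra_simps)
      show ?thesis unfolding e by (simp add: x_def power2_eq_square algebra_simps)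
    qed
    also have "\<dots> = k^2 * (m*(n-1)) * (m*(k*(n-1)+1) + (k-1)*x - m*k*n)" using xn by simp
    also have "\<dots> = k^2 * (x - m) * (m*(k*(n-1)+1) - m*n)"
      by (simp add: algebra_simps power2_eq_square)
    also have "\<dots> = k^2 * (x - m) * ((x*n) - m*n)"
      using xn by simp
    also have "\<dots> = n * (k*(L*n - m))^2"
      by (simp add: x_def power2_eq_square algebra_simps)
    finally show ?thesis .
  qed
  thus ?thesis using assms(2) by simp
qed

lemma var_zero:
  fixes P Q t :: real
  assumes "t > 0" "t * Q = P^2"
  shows "Q - 2 * (P / t) * P + t * (P / t)^2 = 0"
proof -
  have "t * (Q - 2 * (P / t) * P + t * (P / t)^2) = t*Q - P^2"
    using assms(1) by (simp add: field_simps power2_eq_square)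
  thus ?thesis using assms by simp
qed

theorem corollary4:
  fixes lam k n m :: nat and X :: "'a set" and A :: "nat \<Rightarrow> nat \<Rightarrow> 'a" and one :: 'a
  assumes "k \<ge> 2" and "n \<ge> 2" and "lam \<ge> 1"
    and "orthogonal_array lam k n X A"
    and "one \<in> X"
    and "m = card {r. r < lam * n^2 \<and> (\<forall>c < k. A r c = one)}"
    and "real m = real (lam * n^2) / real (k * (n - 1) + 1)"
  shows "\<forall>r < lam * n^2. \<not> (\<forall>c < k. A r c = one) \<longrightarrow>
           real (card {c. c < k \<and> A r c = one})
             = real k * (real lam * real n - real m) / (real lam * real n^2 - real m)"
proof -
  define N where "N = lam * n^2"
  define ind where "ind r c = (if A r c = one then 1 else 0 :: real)" for r c
  define a where "a r = (\<Sum>c<k. ind r c)" for r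
  have OA: "finite X" "card X = n" "\<And>r c. r < N \<Longrightarrow> c < k \<Longrightarrow> A r c \<in> X"
    "\<And>c1 c2 x y. c1 < k \<Longrightarrow> c2 < k \<Longrightarrow> c1 \<noteq> c2 \<Longrightarrow> x \<in> X \<Longrightarrow> y \<in> X \<Longrightarrow>
        card {r. r < N \<and> A r c1 = x \<and> A r c2 = y} = lam"
    using assms(4) unfolding orthogonal_array_def N_def by auto
  have aeq: "real (card {c. c < k \<and> A r c = one}) = a r" for r
  proof -
    have "{c. c < k \<and> A r c = one} = {c \<in> {..<k}. A r c = one}" by auto
    thus ?thesis using card_ind[of "{..<k}" "\<lambda>c. A r c = one"] by (simp add: a_def ind_def)
  qed
  have pair: "(\<Sum>r<N. ind r c1 * ind r c2) = real lam" if "c1 < k" "c2 < k" "c1 \<noteq> c2" for c1 c2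
  proof -
    have "{r. r < N \<and> A r c1 = one \<and> A r c2 = one} = {r \<in> {..<N}. A r c1 = one \<and> A r c2 = one}" by auto
    hence "real lam = (\<Sum>r<N. if A r c1 = one \<and> A r c2 = one then 1 else 0)"
      using OA(4)[OF that assms(5) assms(5)] card_ind[of "{..<N}" "\<lambda>r. A r c1 = one \<and> A r c2 = one"]
      by simp
    moreover have "(\<Sum>r<N. ind r c1 * ind r c2) = (\<Sum>r<N. if A r c1 = one \<and> A r c2 = one then 1 else 0)"
      by (rule sum.cong) (auto simp: ind_def)
    ultimately show ?thesis by simp
  qed
  have col: "(\<Sum>r<N. ind r c) = real lam * real n" if "c < k" for c
  proof -
    define c' where "c' = (if c = 0 then 1 else 0::nat)"
    have c': "c' < k" "c' \<noteq> c" using assms(1) that by (auto simp: c'_def)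
    have "(\<Sum>r<N. ind r c) = (\<Sum>r<N. \<Sum>y\<in>X. ind r c * (if A r c' = y then 1 else 0))"
    proof (rule sum.cong[OF refl])
      fix r assume "r \<in> {..<N}"
      hence "A r c' \<in> X" using OA(3) c' by auto
      thus "ind r c = (\<Sum>y\<in>X. ind r c * (if A r c' = y then 1 else 0))"
        using OA(1) by (simp add: sum_distrib_left[symmetric])
    qed
    also have "\<dots> = (\<Sum>y\<in>X. \<Sum>r<N. ind r c * (if A r c' = y then 1 else 0))"
      by (rule sum.swap)
    also have "\<dots> = (\<Sum>y\<in>X. real lam)"
    proof (rule sum.cong[OF refl])
      fix y assume y: "y \<in> X"
      have "{r. r < N \<and> A r c = one \<and> A r c' = y} = {r \<in> {..<N}. A r c = one \<and> A r c' = y}" by auto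
      hence "real lam = (\<Sum>r<N. if A r c = one \<and> A r c' = y then 1 else 0)"
        using OA(4)[OF that c'(1) c'(2)[symmetric] assms(5) y]
          card_ind[of "{..<N}" "\<lambda>r. A r c = one \<and> A r c' = y"] by simp
      moreover have "(\<Sum>r<N. ind r c * (if A r c' = y then 1 else 0)) = (\<Sum>r<N. if A r c = one \<and> A r c' = y then 1 else 0)"
        by (rule sum.cong) (auto simp: ind_def)
      ultimately show "(\<Sum>r<N. ind r c * (if A r c' = y then 1 else 0)) = real lam"
        by simp
    qed
    also have "\<dots> = real lam * real n" using OA(2) by simp
    finally show ?thesis .
  qed
  have sum1: "(\<Sum>r<N. a r) = real k * real lam * real n"
    unfolding a_def by (subst sum.swap) (simp add: col)
  have sum2: "(\<Sum>r<N. (a r)^2) = real k * real lam * real n + real k * (real k - 1) * real lam"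
  proof -
    have "(\<Sum>r<N. (a r)^2) = (\<Sum>r<N. \<Sum>c1<k. \<Sum>c2<k. ind r c1 * ind r c2)"
      unfolding a_def power2_eq_square sum_product by simp
    also have "\<dots> = (\<Sum>c1<k. \<Sum>c2<k. \<Sum>r<N. ind r c1 * ind r c2)"
      by (simp add: sum.swap[of _ "{..<N}"])
    also have "\<dots> = (\<Sum>c1<k. real lam * real n + (real k - 1) * real lam)"
    proof (rule sum.cong[OF refl])
      fix c1 assume c1: "c1 \<in> {..<k}"
      have "(\<Sum>c2<k. \<Sum>r<N. ind r c1 * ind r c2)
          = (\<Sum>c2<k. if c2 = c1 then real lam * real n else real lam)"
      proof (rule sum.cong[OF refl])
        fix c2 assume c2: "c2 \<in> {..<k}"
        show "(\<Sum>r<N. ind r c1 * ind r c2) = (if c2 = c1 then real lam * real n else real lam)"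
        proof (cases "c2 = c1")
          case True
          have "(\<Sum>r<N. ind r c1 * ind r c1) = (\<Sum>r<N. ind r c1)"
            by (rule sum.cong) (auto simp: ind_def)
          thus ?thesis using True col c1 by simp
        next
          case False thus ?thesis using pair c1 c2 by auto
        qed
      qed
      also have "\<dots> = real lam * real n + (real k - 1) * real lam"
      proof -
        have "(\<Sum>c2<k. if c2 = c1 then real lam * real n else real lam)
           = (\<Sum>c2<k. real lam + (if c2 = c1 then real lam * real n - real lam else 0))"
          by (rule sum.cong) auto
        also have "\<dots> = real k * real lam + (real lam * real n - real lam)"
          using c1 by (simp add: sum.distrib)
        finally show ?thesis by (simp add: algebra_simps)
      qed
      finally show "(\<Sum>c2<k. \<Sum>r<N. ind r c1 * ind r c2) = real lam * real n + (real k - 1) * real lam" .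
    qed
    also have "\<dots> = real k * real lam * real n + real k * (real k - 1) * real lam"
      by (simp add: algebra_simps)
    finally show ?thesis .
  qed
  define S where "S = {r. r < N \<and> (\<forall>c < k. A r c = one)}"
  define T where "T = {..<N} - S"
  have SN: "S \<subseteq> {..<N}" by (auto simp: S_def)
  have finS: "finite S" using SN finite_subset by blast
  have m: "card S = m" using assms(6) by (simp add: S_def N_def)
  have aS: "a r = real k" if "r \<in> S" for r
    using that by (simp add: a_def ind_def S_def)
  have cardT: "real (card T) = real lam * real n^2 - real m"
  proof -
    have "card S \<le> card {..<N}" using SN by (intro card_mono) auto
    hence "m \<le> N" using m by simp
    thus ?thesis using SN finS m by (simp add: T_def card_Diff_subset N_def of_nat_diff)
  qed
  have splitsum: "(\<Sum>r<N. f r) = (\<Sum>r\<in>S. f r) + (\<Sum>r\<in>T. f r)" for f :: "nat \<Rightarrow> real"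
    using sum.subset_diff[OF SN] by (simp add: T_def add.commute)
  have s1: "(\<Sum>r\<in>T. a r) = real k * (real lam * real n - real m)"
    using splitsum[of a] sum1 aS m by (simp add: algebra_simps)
  have s2: "(\<Sum>r\<in>T. (a r)^2) = real k * real lam * real n + real k * (real k - 1) * real lam - real m * real k ^ 2"
    using splitsum[of "\<lambda>r. (a r)^2"] sum2 aS m by (simp add: algebra_simps)
  define t where "t = real lam * real n^2 - real m"
  define mu where "mu = real k * (real lam * real n - real m) / t"
  have D: "real lam * real n^2 = real m * (real k * (real n - 1) + 1)"
  proof -
    have dpos: "real (k*(n-1)+1) > 0" by (simp only: of_nat_0_less_iff)
    have "real m * real (k*(n-1)+1) = real (lam*n^2)"
      using assms(7) dpos by (simp add: field_simps)
    moreover have "real (k*(n-1)+1) = real k * (real n - 1) + 1" using assms(2) by (simp add: of_nat_diff)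
    ultimately show ?thesis by (simp only: of_nat_mult of_nat_power)
  qed
  have mpos: "real m > 0"
  proof -
    have "real (lam * n^2) > 0" using assms(2,3) by simp
    moreover have "real (k*(n-1)+1) > 0" by (simp only: of_nat_0_less_iff)
    ultimately show ?thesis unfolding assms(7) by (rule divide_pos_pos)
  qed
  have tpos: "t > 0"
  proof -
    have "t = real m * real k * (real n - 1)" using D by (simp add: t_def algebra_simps)
    thus ?thesis using mpos assms(1,2) by simp
  qed
  have key: "t * (real k * real lam * real n + real k * (real k - 1) * real lam - real m * real k ^ 2)
      = (real k * (real lam * real n - real m))^2"
    using key_alg[OF D] assms(2) by (simp add: t_def algebra_simps)
  have finT: "finite T" by (simp add: T_def)
  have "(\<Sum>r\<in>T. (a r - mu)^2) = (\<Sum>r\<in>T. (a r)^2) - 2 * mu * (\<Sum>r\<in>T. a r) + real (card T) * mu^2"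
    by (simp add: power2_diff sum.distrib sum_subtractf sum_distrib_left sum_distrib_right algebra_simps)
  also have "\<dots> = 0"
  proof -
    have mu': "mu = (\<Sum>r\<in>T. a r) / t" using s1 by (simp add: mu_def)
    have ct: "real (card T) = t" using cardT by (simp add: t_def)
    have k2: "t * (\<Sum>r\<in>T. (a r)^2) = (\<Sum>r\<in>T. a r)^2" using key by (simp only: s1 s2)
    show ?thesis unfolding mu' ct using var_zero[OF tpos k2] .
  qed
  finally have z: "(\<Sum>r\<in>T. (a r - mu)^2) = 0" .
  have each: "(a r - mu)^2 = 0" if "r \<in> T" for r
    using sum_nonneg_eq_0_iff[OF finT, of "\<lambda>r. (a r - mu)^2"] z that by simp
  show ?thesis
  proof (intro allI impI)
    fix r assume r: "r < lam * n^2" "\<not> (\<forall>c<k. A r c = one)"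
    hence "r \<in> T" by (auto simp: T_def S_def N_def)
    hence "a r = mu" using each by simp
    thus "real (card {c. c < k \<and> A r c = one})
             = real k * (real lam * real n - real m) / (real lam * real n^2 - real m)"
      using aeq by (simp add: mu_def t_def)
  qed
qed

end
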